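(* Let $p,d\ge 1$ be integers, let $C_0,\dots,C_{p-1}\in\mathbb{R}^{d\times d}$, and let $M\in\mathbb{R}^{pd\times pd}$ be the block companion matrix whose block rows $i=1,\dots,p-1$ have $I_d$ in block column $i+1$ and zeros elsewhere, and whose last block row is $(C_0,C_1,\dots,C_{p-1})$. Suppose there is an invertible $Q\in\mathbb{R}^{d\times d}$ such that $T_i:=Q^{-1}C_iQ$ is upper triangular for each $i$. Then the set of eigenvalues of $M$ equals $$\bigcup_{j=1}^d\left\{\lambda\in\mathbb{C}:\ \lambda^p-\sum_{k=0}^{p-1}\lambda^k (T_k)_{j,j}=0\right\}.$$
   Context: The diagonal entries $(T_k)_{1,1},\dots,(T_k)_{d,d}$ are the eigenvalues of $C_k$ listed in the order induced by $Q$. *)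

theory Defs
  imports Complex_Main "Jordan_Normal_Form.Matrix" "Jordan_Normal_Form.Char_Poly"
begin

text \<open>Block companion matrix of size (p*d) x (p*d), 0-based indices.
  Block row i < p-1 has the identity in block column i+1; the last block row
  is (C 0, C 1, ..., C (p-1)).\<close>
definition block_companion :: "nat \<Rightarrow> nat \<Rightarrow> (nat \<Rightarrow> real mat) \<Rightarrow> real mat" where
  "block_companion p d C = mat (p * d) (p * d) (\<lambda>(r, c).
     let i = r div d; a = r mod d; j = c div d; b = c mod d in
     if i < p - 1 then (if j = i + 1 \<and> a = b then 1 else 0)
     else C j $$ (a, b))"

end

theory Submission imports Defs begin

lemma sum_lessThan_add_nat: "(\<Sum>c<m+(n::nat). f c) = (\<Sum>c<m. f c) + (\<Sum>b<n. f (m+b))"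
  by (induct n) (auto simp: add_ac)

lemma sum_block: "(\<Sum>c<p*d. f c) = (\<Sum>j<p. \<Sum>b<(d::nat). f (j*d+b))"
proof (induct p)
  case (Suc p)
  have "(\<Sum>c<Suc p*d. f c) = (\<Sum>c<p*d + d. f c)" by (simp add: add.commute)
  also have "\<dots> = (\<Sum>c<p*d. f c) + (\<Sum>b<d. f (p*d+b))" by (rule sum_lessThan_add_nat)
  finally show ?case using Suc by simp
qed simp

lemma bc_mult:
  assumes v: "v \<in> carrier_vec (p*d)" and r: "r < p*d"
  shows "(map_mat complex_of_real (block_companion p d C) *\<^sub>v v) $ r =
    (if r div d < p - 1 then v $ (r + d)
     else (\<Sum>j<p. \<Sum>b<d. complex_of_real (C j $$ (r mod d, b)) * v $ (j*d+b)))"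
proof -
  have d: "d > 0" using r by (cases d) auto
  have "(map_mat complex_of_real (block_companion p d C) *\<^sub>v v) $ r =
     (\<Sum>c<p*d. complex_of_real (block_companion p d C $$ (r,c)) * v $ c)"
    using v r by (simp add: block_companion_def scalar_prod_def atLeast0LessThan mult.commute)
  also have "\<dots> = (\<Sum>j<p. \<Sum>b<d. complex_of_real (block_companion p d C $$ (r,j*d+b)) * v $ (j*d+b))"
    by (rule sum_block)
  also have "\<dots> = (\<Sum>j<p. \<Sum>b<d. complex_of_real (if r div d < p - 1 then (if j = r div d + 1 \<and> r mod d = b then 1 else 0)
     else C j $$ (r mod d, b)) * v $ (j*d+b))"
  proof (intro sum.cong refl)
    fix j b assume j: "j \<in> {..<p}" and b: "b \<in> {..<d}"
    have jb: "j*d+b < p*d"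
    proof -
      have "j*d + b < j*d + d" using b by simp
      also have "\<dots> = (Suc j) * d" by simp
      also have "\<dots> \<le> p * d" using j by (intro mult_right_mono) auto
      finally show ?thesis .
    qed
    have "(j*d+b) div d = j" "(j*d+b) mod d = b" using b d by auto
    then show "complex_of_real (block_companion p d C $$ (r,j*d+b)) * v $ (j*d+b) =
      complex_of_real (if r div d < p - 1 then (if j = r div d + 1 \<and> r mod d = b then 1 else 0)
     else C j $$ (r mod d, b)) * v $ (j*d+b)"
      using r jb by (simp add: block_companion_def Let_def)
  qed
  also have "\<dots> = (if r div d < p - 1 then v $ (r + d)
     else (\<Sum>j<p. \<Sum>b<d. complex_of_real (C j $$ (r mod d, b)) * v $ (j*d+b)))"
  proof (cases "r div d < p - 1")
    case True
    have "(\<Sum>j<p. \<Sum>b<d. complex_of_real (if j = r div d + 1 \<and> r mod d = b then 1 else 0) * v $ (j*d+b))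
      = (\<Sum>j<p. if j = r div d + 1 then v $ (j*d + r mod d) else 0)"
    proof (intro sum.cong refl)
      fix j assume "j \<in> {..<p}"
      show "(\<Sum>b<d. complex_of_real (if j = r div d + 1 \<and> r mod d = b then 1 else 0) * v $ (j*d+b))
        = (if j = r div d + 1 then v $ (j*d + r mod d) else 0)"
      proof (cases "j = r div d + 1")
        case True
        have "(\<Sum>b<d. complex_of_real (if j = r div d + 1 \<and> r mod d = b then 1 else 0) * v $ (j*d+b))
          = (\<Sum>b<d. if b = r mod d then v $ (j*d+b) else 0)"
          using True by (intro sum.cong refl) auto
        also have "\<dots> = v $ (j*d + r mod d)" using d by (simp add: sum.delta')
        finally show ?thesis using True by simp
      qed simp
    qed
    also have "\<dots> = v $ ((r div d + 1) * d + r mod d)" using True by (simp add: sum.delta)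
    also have "(r div d + 1) * d + r mod d = r + d" by (simp add: algebra_simps)
    finally show ?thesis using True by simp
  qed simp
  finally show ?thesis .
qed
lemma eig_iff:
  assumes p: "p \<ge> 1" and d: "d \<ge> 1"
  shows "eigenvalue (map_mat complex_of_real (block_companion p d C)) z \<longleftrightarrow>
    (\<exists>w. w \<in> carrier_vec d \<and> w \<noteq> 0\<^sub>v d \<and>
      (\<forall>a<d. z^p * w$a = (\<Sum>j<p. \<Sum>b<d. complex_of_real (C j $$ (a,b)) * (z^j * w$b))))"
    (is "?L \<longleftrightarrow> ?R")
proof
  let ?M = "map_mat complex_of_real (block_companion p d C)"
  have dimM: "dim_row ?M = p*d" by (simp add: block_companion_def)
  assume ?L
  then obtain v where v: "v \<in> carrier_vec (p*d)" "v \<noteq> 0\<^sub>v (p*d)" "?M *\<^sub>v v = z \<cdot>\<^sub>v v"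
    unfolding eigenvalue_def eigenvector_def dimM by auto
  define w where "w = vec d (\<lambda>a. v $ a)"
  have pd: "\<And>i a. i < p \<Longrightarrow> a < d \<Longrightarrow> i*d+a < p*d"
  proof -
    fix i a assume "i < p" "a < d"
    have "i*d + a < i*d + d" using \<open>a<d\<close> by simp
    also have "\<dots> = Suc i * d" by simp
    also have "\<dots> \<le> p*d" using \<open>i<p\<close> by (intro mult_right_mono) auto
    finally show "i*d+a < p*d" .
  qed
  have vw: "\<forall>a<d. v $ (i*d+a) = z^i * w$a" if "i < p" for i
    using that
  proof (induct i)
    case 0 then show ?case by (simp add: w_def)
  next
    case (Suc i)
    show ?case
    proof (intro allI impI)
      fix a assume a: "a < d"
      have r: "i*d+a < p*d" using pd[of i a] Suc a by simp
      have "(?M *\<^sub>v v) $ (i*d+a) = v $ (i*d+a+d)"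
        using bc_mult[OF v(1) r, of C] Suc a by simp
      moreover have "(?M *\<^sub>v v) $ (i*d+a) = z * v $ (i*d+a)"
        using v(3) r v(1) by simp
      ultimately have "v $ (i*d+a+d) = z * v $ (i*d+a)" by simp
      then show "v $ (Suc i*d+a) = z^Suc i * w$a" using Suc a by (simp add: algebra_simps)
    qed
  qed
  have w: "w \<in> carrier_vec d" by (simp add: w_def)
  moreover have "w \<noteq> 0\<^sub>v d"
  proof
    assume "w = 0\<^sub>v d"
    then have "v = 0\<^sub>v (p*d)"
    proof (intro eq_vecI)
      fix r assume "w = 0\<^sub>v d" and "r < dim_vec (0\<^sub>v (p * d) :: complex vec)"
      then have r: "r < p*d" by simp
      have "r div d < p" using r by (rule less_mult_imp_div_less)
      moreover have "r mod d < d" using d by simp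
      ultimately have "v $ ((r div d)*d + r mod d) = z^(r div d) * w $ (r mod d)" using vw by blast
      then show "v $ r = 0\<^sub>v (p*d) $ r" using \<open>w = 0\<^sub>v d\<close> d r by simp
    qed (use v in simp)
    with v(2) show False by simp
  qed
  moreover have "\<forall>a<d. z^p * w$a = (\<Sum>j<p. \<Sum>b<d. complex_of_real (C j $$ (a,b)) * (z^j * w$b))"
  proof (intro allI impI)
    fix a assume a: "a < d"
    define r where "r = (p-1)*d+a"
    have r: "r < p*d" using pd[of "p-1" a] p a by (simp add: r_def)
    have rd: "r div d = p - 1" "r mod d = a" using a by (auto simp: r_def)
    have "(?M *\<^sub>v v) $ r = (\<Sum>j<p. \<Sum>b<d. complex_of_real (C j $$ (a, b)) * v $ (j*d+b))"
      using bc_mult[OF v(1) r, of C] rd by simp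
    also have "\<dots> = (\<Sum>j<p. \<Sum>b<d. complex_of_real (C j $$ (a,b)) * (z^j * w$b))"
      using vw by (intro sum.cong refl) auto
    finally have 1: "(?M *\<^sub>v v) $ r = \<dots>" .
    have "(?M *\<^sub>v v) $ r = z * v $ r" using v(3) r v(1) by simp
    also have "\<dots> = z * (z^(p-1) * w$a)" using vw[of "p-1"] p a by (simp add: r_def)
    also have "\<dots> = z^p * w$a" using p by (simp add: power_eq_if)
    finally show "z^p * w$a = (\<Sum>j<p. \<Sum>b<d. complex_of_real (C j $$ (a,b)) * (z^j * w$b))"
      using 1 by simp
  qed
  ultimately show ?R by blast
next
  let ?M = "map_mat complex_of_real (block_companion p d C)"
  have dimM: "dim_row ?M = p*d" by (simp add: block_companion_def)
  assume ?R
  then obtain w where w: "w \<in> carrier_vec d" "w \<noteq> 0\<^sub>v d"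
    "\<forall>a<d. z^p * w$a = (\<Sum>j<p. \<Sum>b<d. complex_of_real (C j $$ (a,b)) * (z^j * w$b))" by blast
  define v where "v = vec (p*d) (\<lambda>r. z^(r div d) * w $ (r mod d))"
  have v: "v \<in> carrier_vec (p*d)" by (simp add: v_def)
  have dpd: "d \<le> p*d" using p by simp
  have "v \<noteq> 0\<^sub>v (p*d)"
  proof
    assume "v = 0\<^sub>v (p*d)"
    then have "w = 0\<^sub>v d"
    proof (intro eq_vecI)
      fix a assume "v = 0\<^sub>v (p*d)" "a < dim_vec (0\<^sub>v d :: complex vec)"
      then have a: "a < d" by simp
      have apd: "a < p*d" using a dpd by linarith
      have "v $ a = 0" using \<open>v = 0\<^sub>v (p*d)\<close> apd by simp
      then show "w $ a = 0\<^sub>v d $ a" using a apd by (simp add: v_def)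
    qed (use w in simp)
    with w(2) show False by simp
  qed
  moreover have "?M *\<^sub>v v = z \<cdot>\<^sub>v v"
  proof (intro eq_vecI)
    fix r assume "r < dim_vec (z \<cdot>\<^sub>v v)"
    then have r: "r < p*d" by (simp add: v_def)
    have d0: "d > 0" using d by simp
    show "(?M *\<^sub>v v) $ r = (z \<cdot>\<^sub>v v) $ r"
    proof (cases "r div d < p - 1")
      case True
      have rd: "r + d < p*d"
      proof -
        have m: "r mod d < d" "r div d * d + r mod d = r" using d0 by auto
        have "(r div d + 2) * d \<le> p * d" using True by (intro mult_right_mono) auto
        then have "r div d * d + 2 * d \<le> p * d" by (simp add: algebra_simps)
        then show ?thesis using m by linarith

      qed
      have "(r+d) div d = r div d + 1" "(r+d) mod d = r mod d" using d0 by auto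
      then show ?thesis using bc_mult[OF v r, of C] True r rd by (simp add: v_def)
    next
      case False
      have "r div d < p" using r by (rule less_mult_imp_div_less)
      with False have rd: "r div d = p - 1" by simp
      have "(?M *\<^sub>v v) $ r = (\<Sum>j<p. \<Sum>b<d. complex_of_real (C j $$ (r mod d, b)) * v $ (j*d+b))"
        using bc_mult[OF v r, of C] False by simp
      also have "\<dots> = (\<Sum>j<p. \<Sum>b<d. complex_of_real (C j $$ (r mod d, b)) * (z^j * w$b))"
      proof (intro sum.cong refl)
        fix j b assume "j \<in> {..<p}" "b \<in> {..<d}"
        moreover have "j*d+b < p*d"
        proof -
          have "j*d + b < j*d + d" using \<open>b \<in> {..<d}\<close> by simp
          also have "\<dots> = Suc j * d" by simp
          also have "\<dots> \<le> p*d" using \<open>j \<in> {..<p}\<close> by (intro mult_right_mono) auto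
          finally show ?thesis .
        qed
        ultimately show "complex_of_real (C j $$ (r mod d, b)) * v $ (j*d+b) = complex_of_real (C j $$ (r mod d, b)) * (z^j * w$b)"
          by (simp add: v_def)
      qed
      also have "\<dots> = z^p * w $ (r mod d)" using w(3) d0 by simp
      also have "\<dots> = z * (z^(r div d) * w $ (r mod d))" using rd p by (simp add: power_eq_if)
      finally show ?thesis using r by (simp add: v_def)
    qed
  qed (simp add: v_def block_companion_def)
  ultimately show ?L unfolding eigenvalue_def eigenvector_def dimM using v by blast
qed

lemma Pvec:
  assumes w: "w \<in> carrier_vec d"
  shows "(mat d d (\<lambda>(a,b). (if a = b then z^p else 0) - (\<Sum>k<p. z^k * complex_of_real (C k $$ (a,b)))) *\<^sub>v w = 0\<^sub>v d)
    \<longleftrightarrow> (\<forall>a<d. z^p * w$a = (\<Sum>j<p. \<Sum>b<d. complex_of_real (C j $$ (a,b)) * (z^j * w$b)))"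
proof -
  have e: "(mat d d (\<lambda>(a,b). (if a = b then z^p else 0) - (\<Sum>k<p. z^k * complex_of_real (C k $$ (a,b)))) *\<^sub>v w) $ a
    = z^p * w$a - (\<Sum>j<p. \<Sum>b<d. complex_of_real (C j $$ (a,b)) * (z^j * w$b))" if a: "a < d" for a
  proof -
    have "(mat d d (\<lambda>(a,b). (if a = b then z^p else 0) - (\<Sum>k<p. z^k * complex_of_real (C k $$ (a,b)))) *\<^sub>v w) $ a
      = (\<Sum>b<d. ((if a = b then z^p else 0) - (\<Sum>k<p. z^k * complex_of_real (C k $$ (a,b)))) * w $ b)"
      using a w by (simp add: scalar_prod_def atLeast0LessThan mult.commute)
    also have "\<dots> = (\<Sum>b<d. (if a = b then z^p * w$b else 0)) - (\<Sum>b<d. \<Sum>k<p. z^k * complex_of_real (C k $$ (a,b)) * w $ b)"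
    proof -
      have "(\<Sum>b<d. ((if a = b then z^p else 0) - (\<Sum>k<p. z^k * complex_of_real (C k $$ (a,b)))) * w $ b)
        = (\<Sum>b<d. (if a = b then z^p * w$b else 0) - (\<Sum>k<p. z^k * complex_of_real (C k $$ (a,b)) * w $ b))"
        by (intro sum.cong refl) (simp add: left_diff_distrib sum_distrib_right)
      then show ?thesis by (simp only: sum_subtractf)
    qed
    also have "\<dots> = z^p * w$a - (\<Sum>j<p. \<Sum>b<d. complex_of_real (C j $$ (a,b)) * (z^j * w$b))"
      using a by (simp add: sum.swap[of _ "{..<d}"] mult_ac)
    finally show ?thesis .
  qed
  show ?thesis
  proof
    assume h: "mat d d (\<lambda>(a,b). (if a = b then z^p else 0) - (\<Sum>k<p. z^k * complex_of_real (C k $$ (a,b)))) *\<^sub>v w = 0\<^sub>v d"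
    show "\<forall>a<d. z^p * w$a = (\<Sum>j<p. \<Sum>b<d. complex_of_real (C j $$ (a,b)) * (z^j * w$b))"
    proof (intro allI impI)
      fix a assume a: "a < d"
      from arg_cong[OF h, of "\<lambda>x. x $ a"] e[OF a] a show "z^p * w$a = (\<Sum>j<p. \<Sum>b<d. complex_of_real (C j $$ (a,b)) * (z^j * w$b))"
        by simp
    qed
  next
    assume h: "\<forall>a<d. z^p * w$a = (\<Sum>j<p. \<Sum>b<d. complex_of_real (C j $$ (a,b)) * (z^j * w$b))"
    show "mat d d (\<lambda>(a,b). (if a = b then z^p else 0) - (\<Sum>k<p. z^k * complex_of_real (C k $$ (a,b)))) *\<^sub>v w = 0\<^sub>v d"
      by (rule eq_vecI) (use e h in auto)
  qed
qed


theorem corollary2p7: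
  fixes p d :: nat and C T :: "nat \<Rightarrow> real mat" and Q Qi :: "real mat"
  assumes "p \<ge> 1" and "d \<ge> 1"
    and "\<And>k. k < p \<Longrightarrow> C k \<in> carrier_mat d d"
    and "Q \<in> carrier_mat d d" and "Qi \<in> carrier_mat d d"
    and "Qi * Q = 1\<^sub>m d" and "Q * Qi = 1\<^sub>m d"
    and "\<And>k. k < p \<Longrightarrow> T k = Qi * C k * Q"
    and "\<And>k. k < p \<Longrightarrow> upper_triangular (T k)"
  shows "{z::complex. eigenvalue (map_mat complex_of_real (block_companion p d C)) z}
       = (\<Union>j<d. {z::complex. z ^ p - (\<Sum>k<p. z ^ k * complex_of_real (T k $$ (j, j))) = 0})"
proof -
  note Ccar = assms(3) and Q = assms(4) and Qi = assms(5)
  let ?cr = "map_mat complex_of_real"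
  have Qc: "?cr Q \<in> carrier_mat d d" "?cr Qi \<in> carrier_mat d d" using Q Qi by auto
  have QQ: "?cr Qi * ?cr Q = 1\<^sub>m d"
    using of_real_hom.mat_hom_mult[OF Qi Q] assms(6) of_real_hom.mat_hom_one by metis
  have detQQ: "det (?cr Qi) * det (?cr Q) = 1"
    using det_mult[OF Qc(2) Qc(1)] QQ by simp
  have Tc: "?cr Qi * ?cr (C k) * ?cr Q = ?cr (T k)" if "k < p" for k
    using of_real_hom.mat_hom_mult[OF Qi Ccar[OF that]] of_real_hom.mat_hom_mult[OF mult_carrier_mat[OF Qi Ccar[OF that]] Q]
      assms(8)[OF that] by metis
  show ?thesis
  proof (rule Set.set_eqI)
    fix z :: complex
    define S where "S n = mat d d (\<lambda>(a,b). \<Sum>k<n. z^k * complex_of_real (C k $$ (a,b)))" for n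
    define ST where "ST n = mat d d (\<lambda>(a,b). \<Sum>k<n. z^k * complex_of_real (T k $$ (a,b)))" for n
    have Scar: "S n \<in> carrier_mat d d" for n by (simp add: S_def)
    have conj: "n \<le> p \<Longrightarrow> ?cr Qi * S n * ?cr Q = ST n" for n
    proof (induct n)
      case 0
      have "S 0 = 0\<^sub>m d d" by (rule eq_matI) (auto simp: S_def)
      moreover have "ST 0 = 0\<^sub>m d d" by (rule eq_matI) (auto simp: ST_def)
      ultimately show ?case using Qc by simp
    next
      case (Suc n)
      have n: "n < p" using Suc by simp
      have Cn: "?cr (C n) \<in> carrier_mat d d" using Ccar[OF n] by simp
      have Tn: "T n \<in> carrier_mat d d" using assms(8)[OF n] Qi Q Ccar[OF n] by simp
      have "S (Suc n) = S n + z^n \<cdot>\<^sub>m ?cr (C n)"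
        by (rule eq_matI) (use Ccar[OF n] in \<open>auto simp: S_def\<close>)
      moreover have "ST (Suc n) = ST n + z^n \<cdot>\<^sub>m ?cr (T n)"
        by (rule eq_matI) (use Tn in \<open>auto simp: ST_def\<close>)
      moreover have "?cr Qi * (S n + z^n \<cdot>\<^sub>m ?cr (C n)) * ?cr Q
          = ?cr Qi * S n * ?cr Q + z^n \<cdot>\<^sub>m (?cr Qi * ?cr (C n) * ?cr Q)"
        using Qc Cn Scar[of n]
        by (simp add: mult_add_distrib_mat[of _ d d] add_mult_distrib_mat[of _ d d] mult_smult_distrib[of _ d d]
            mult_smult_assoc_mat[of _ d d])
      ultimately show ?case using Suc n Tc[OF n] by simp
    qed
    define P where "P = mat d d (\<lambda>(a,b). (if a = b then z^p else 0) - (\<Sum>k<p. z^k * complex_of_real (C k $$ (a,b))))"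
    define U where "U = mat d d (\<lambda>(a,b). (if a = b then z^p else 0) - (\<Sum>k<p. z^k * complex_of_real (T k $$ (a,b))))"
    have Pcar: "P \<in> carrier_mat d d" by (simp add: P_def)
    have P: "P = z^p \<cdot>\<^sub>m 1\<^sub>m d - S p" by (rule eq_matI) (auto simp: P_def S_def)
    have U: "U = z^p \<cdot>\<^sub>m 1\<^sub>m d - ST p" by (rule eq_matI) (auto simp: U_def ST_def)
    have PU: "?cr Qi * P * ?cr Q = U"
    proof -
      have 1: "?cr Qi * (z^p \<cdot>\<^sub>m 1\<^sub>m d - S p) = z^p \<cdot>\<^sub>m ?cr Qi - ?cr Qi * S p"
        using mult_minus_distrib_mat[OF Qc(2) smult_carrier_mat[OF one_carrier_mat] Scar[of p]]
          mult_smult_distrib[OF Qc(2) one_carrier_mat, of "z^p"] Qc(2) by simp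
      have 2: "(z^p \<cdot>\<^sub>m ?cr Qi - ?cr Qi * S p) * ?cr Q = z^p \<cdot>\<^sub>m (?cr Qi * ?cr Q) - ?cr Qi * S p * ?cr Q"
        using minus_mult_distrib_mat[OF smult_carrier_mat[OF Qc(2)] mult_carrier_mat[OF Qc(2) Scar[of p]] Qc(1)]
          mult_smult_assoc_mat[OF Qc(2) Qc(1)] by simp
      have "?cr Qi * P * ?cr Q = z^p \<cdot>\<^sub>m (?cr Qi * ?cr Q) - ?cr Qi * S p * ?cr Q"
        unfolding P 1 2 ..
      then show ?thesis using QQ conj[of p] U by simp
    qed
    have detPU: "det P = 0 \<longleftrightarrow> det U = 0"
    proof -
      have "det U = det (?cr Qi) * det P * det (?cr Q)"
        using PU det_mult[OF mult_carrier_mat[OF Qc(2) Pcar] Qc(1)] det_mult[OF Qc(2) Pcar] by simp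
      then have "det U = det P" using detQQ by (simp add: mult_ac)
      then show ?thesis by simp
    qed
    have ut: "upper_triangular U"
      unfolding upper_triangular_def
    proof (intro allI impI)
      fix i j assume i: "i < dim_row U" and j: "j < i"
      have "T k $$ (i,j) = 0" if "k < p" for k
      proof -
        have Tk: "T k \<in> carrier_mat d d" using assms(8)[OF that] Qi Q Ccar[OF that] by simp
        show ?thesis using assms(9)[OF that] i j Tk unfolding upper_triangular_def by (auto simp: U_def)
      qed
      then show "U $$ (i,j) = 0" using i j by (auto simp: U_def)
    qed
    have detU: "det U = (\<Prod>j = 0..<d. z ^ p - (\<Sum>k<p. z ^ k * complex_of_real (T k $$ (j, j))))"
      using det_upper_triangular[OF ut, of d] by (simp add: U_def prod_list_diag_prod)
    have "z \<in> {z. eigenvalue (?cr (block_companion p d C)) z} \<longleftrightarrow>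
       (\<exists>w. w \<in> carrier_vec d \<and> w \<noteq> 0\<^sub>v d \<and> P *\<^sub>v w = 0\<^sub>v d)"
      using eig_iff[OF assms(1,2), of C z] Pvec[of _ d z p C] unfolding P_def by auto
    also have "\<dots> \<longleftrightarrow> det P = 0" using det_0_iff_vec_prod_zero[OF Pcar] by simp
    also have "\<dots> \<longleftrightarrow> det U = 0" by (rule detPU)
    also have "\<dots> \<longleftrightarrow> z \<in> (\<Union>j<d. {z::complex. z ^ p - (\<Sum>k<p. z ^ k * complex_of_real (T k $$ (j, j))) = 0})"
      unfolding detU by (auto simp: atLeast0LessThan)
    finally show "z \<in> {z. eigenvalue (?cr (block_companion p d C)) z} \<longleftrightarrow> z \<in> (\<Union>j<d. {z::complex. z ^ p - (\<Sum>k<p. z ^ k * complex_of_real (T k $$ (j, j))) = 0})" .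
  qed
qed

end
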